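(* Two factor sets of an ACI-matrix over a field $\mathbb{F}$ cannot be disjoint.
   Context: Let $\mathbb{F}$ be a field. An ACI-matrix is a matrix with entries in $\mathbb{F}[x_1,\dots,x_k]$ whose entries are polynomials of degree at most one and such that no indeterminate appears in two different columns. A completion is an assignment of values in $\mathbb{F}$ to all indeterminates; $\mathrm{maxRank}(N)$ is the maximum rank of a completion. ACI-matrices (and blocks) of size $0\times q$ ($q>0$, wide degenerate), $p\times 0$ ($p>0$, tall degenerate) and $0\times0$ (void) are allowed. $N$ is FRmR if $\mathrm{maxRank}(N)=\mathrm{rows}(N)$, FCmR if $\mathrm{maxRank}(N)=\mathrm{cols}(N)$; by convention tall degenerate is FRmR, wide degenerate is FCmR, void is both. For an $m\times n$ block matrix $\begin{bmatrix} A & B\\ 0 & C\end{bmatrix}$ with lower-left $r\times s$ zero block, the zero block is Big if $r+s>\max\{m,n\}$. For $F=\{f_1<\dots<f_s\}\subseteq\{1,\dots,n\}$ with complement $\{g_1<\dots<g_{n-s}\}$, $Q_F$ is the $n\times n$ permutation matrix such that $MQ_F$ has as columns $f_1,\dots,f_s,g_1,\dots,g_{n-s}$ of $M$ in that order. For an $m\times n$ ACI-matrix $M$, $F$ is a factor set of $M$ if there is a nonsingular constant $m\times m$ matrix $R$ with $RMQ_F=\begin{bmatrix} A & B\\ 0 & C\end{bmatrix}$, where $A$ has $\#F$ columns, the zero block is Big, $A$ is FRmR and $C$ is FCmR. *)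

theory Defs
  imports "Jordan_Normal_Form.DL_Rank"
begin

text \<open>An entry of an ACI-matrix in F[x_0,...,x_(k-1)] is a polynomial of degree at most one,
  represented as a pair (c, a): the polynomial c + sum_(v<k) a v * x_v.
  Coefficients a v for v >= k are required to vanish (see aci_matrix).\<close>
type_synonym 'a aff = "'a \<times> (nat \<Rightarrow> 'a)"

definition appears :: "nat \<Rightarrow> 'a::zero aff \<Rightarrow> bool" where
  "appears v e \<longleftrightarrow> snd e v \<noteq> 0"

definition aci_matrix :: "nat \<Rightarrow> 'a::zero aff mat \<Rightarrow> bool" where
  "aci_matrix k M \<longleftrightarrow>
     (\<forall>i < dim_row M. \<forall>j < dim_col M. \<forall>v. appears v (M $$ (i,j)) \<longrightarrow> v < k) \<and>
     (\<forall>v i j i' j'. i < dim_row M \<longrightarrow> j < dim_col M \<longrightarrow> i' < dim_row M \<longrightarrow> j' < dim_col M \<longrightarrow>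
        appears v (M $$ (i,j)) \<longrightarrow> appears v (M $$ (i',j')) \<longrightarrow> j = j')"

definition aff_eval :: "nat \<Rightarrow> (nat \<Rightarrow> 'a::comm_ring_1) \<Rightarrow> 'a aff \<Rightarrow> 'a" where
  "aff_eval k t e = fst e + (\<Sum>v<k. snd e v * t v)"

definition completion :: "nat \<Rightarrow> (nat \<Rightarrow> 'a::comm_ring_1) \<Rightarrow> 'a aff mat \<Rightarrow> 'a mat" where
  "completion k t M = map_mat (aff_eval k t) M"

definition maxRank :: "nat \<Rightarrow> 'a::field aff mat \<Rightarrow> nat" where
  "maxRank k M = Max {vec_space.rank (dim_row M) (completion k t M) | t. True}"

text \<open>Conventions: tall degenerate (p x 0, p>0) is FRmR, wide degenerate (0 x q, q>0) is FCmR,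
  void is both.\<close>
definition FRmR :: "nat \<Rightarrow> 'a::field aff mat \<Rightarrow> bool" where
  "FRmR k N \<longleftrightarrow> dim_col N = 0 \<or> maxRank k N = dim_row N"

definition FCmR :: "nat \<Rightarrow> 'a::field aff mat \<Rightarrow> bool" where
  "FCmR k N \<longleftrightarrow> dim_row N = 0 \<or> maxRank k N = dim_col N"

definition aff_lmult :: "'a::comm_ring_1 mat \<Rightarrow> 'a aff mat \<Rightarrow> 'a aff mat" where
  "aff_lmult R M = mat (dim_row R) (dim_col M) (\<lambda>(i,j).
     ((\<Sum>l<dim_col R. R $$ (i,l) * fst (M $$ (l,j))),
      (\<lambda>v. \<Sum>l<dim_col R. R $$ (i,l) * snd (M $$ (l,j)) v)))"

definition aff_rmult :: "'a aff mat \<Rightarrow> 'a::comm_ring_1 mat \<Rightarrow> 'a aff mat" where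
  "aff_rmult M Q = mat (dim_row M) (dim_col Q) (\<lambda>(i,j).
     ((\<Sum>l<dim_col M. fst (M $$ (i,l)) * Q $$ (l,j)),
      (\<lambda>v. \<Sum>l<dim_col M. snd (M $$ (i,l)) v * Q $$ (l,j))))"

text \<open>Column indices are 0-based. col_order n F = [f_1,...,f_s,g_1,...,g_(n-s)].\<close>
definition col_order :: "nat \<Rightarrow> nat set \<Rightarrow> nat list" where
  "col_order n F = sorted_list_of_set F @ sorted_list_of_set ({0..<n} - F)"

text \<open>Q_F: the n x n permutation matrix such that column j of M Q_F is column (col_order n F ! j) of M.\<close>
definition perm_Q :: "nat \<Rightarrow> nat set \<Rightarrow> 'a::comm_ring_1 mat" where
  "perm_Q n F = mat n n (\<lambda>(i,j). if i = col_order n F ! j then 1 else 0)"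

definition zero_aff :: "'a::zero aff \<Rightarrow> bool" where
  "zero_aff e \<longleftrightarrow> fst e = 0 \<and> (\<forall>v. snd e v = 0)"

text \<open>F is a factor set of the m x n ACI-matrix M: there is a nonsingular constant R with
  R M Q_F = [A B; 0 C], A having #F columns (and p rows), the (m-p) x #F zero block Big,
  A FRmR and C FCmR.\<close>
definition factor_set :: "nat \<Rightarrow> 'a::field aff mat \<Rightarrow> nat set \<Rightarrow> bool" where
  "factor_set k M F \<longleftrightarrow> F \<subseteq> {0..<dim_col M} \<and>
    (\<exists>R p. R \<in> carrier_mat (dim_row M) (dim_row M) \<and> invertible_mat R \<and> p \<le> dim_row M \<and>
      (let N = aff_rmult (aff_lmult R M) (perm_Q (dim_col M) F);
           m = dim_row M; n = dim_col M; s = card F; r = m - p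
       in (\<forall>i j. p \<le> i \<longrightarrow> i < m \<longrightarrow> j < s \<longrightarrow> zero_aff (N $$ (i,j))) \<and>
          r + s > max m n \<and>
          FRmR k (mat p s (\<lambda>(i,j). N $$ (i,j))) \<and>
          FCmR k (mat r (n - s) (\<lambda>(i,j). N $$ (p + i, s + j)))))"

end

theory Submission imports Defs begin

lemma (in vec_space) non_distinct_low_rank_gen:
assumes "A \<in> carrier_mat n nc"
and "\<not> distinct (cols A)"
shows "rank A < nc"
proof -
  obtain S where "maximal S (\<lambda>T. T \<subseteq> set (cols A) \<and> lin_indpt T)"
    using maximal_exists[of "(\<lambda>T. T \<subseteq> set (cols A) \<and> lin_indpt T)" "card (set (cols A))" "{}"]
    by (meson List.finite_set card_mono empty_iff empty_subsetI finite_lin_indpt2 rev_finite_subset)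
  then have "card S \<le> card (set (cols A))" by (simp add: card_mono maximal_def)
  then have "card S < nc"
    using assms(1) cols_length card_length \<open>\<not> distinct (cols A)\<close> card_distinct carrier_matD(2) nat_less_le
    by (metis dual_order.antisym dual_order.trans)
  then show ?thesis
    using rank_card_indpt[OF \<open>A \<in> carrier_mat n nc\<close> \<open>maximal S (\<lambda>T. T \<subseteq> set (cols A) \<and> lin_indpt T)\<close>]
    by simp
qed

lemma (in vec_space) full_rank_inj:
  assumes "A \<in> carrier_mat n nc" "rank A = nc" "v \<in> carrier_vec nc" "A *\<^sub>v v = 0\<^sub>v n"
  shows "v = 0\<^sub>v nc"
proof (rule ccontr)
  assume nz: "v \<noteq> 0\<^sub>v nc"
  show False
  proof (cases "distinct (cols A)")
    case True
    then show False using lin_depI[OF assms(1) assms(3) nz assms(4) True]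
      full_rank_lin_indpt[OF assms(1) assms(2) True] by blast
  next
    case False
    then show False using non_distinct_low_rank_gen[OF assms(1)] assms(2) by simp
  qed
qed

lemma wide_kernel:
  fixes B :: "'a::field mat"
  assumes B: "B \<in> carrier_mat p s" and ps: "p < s"
  shows "\<exists>y. y \<in> carrier_vec s \<and> y \<noteq> 0\<^sub>v s \<and> B *\<^sub>v y = 0\<^sub>v p"
proof -
  define c where "c = (\<lambda>i. vec s (\<lambda>j. if i < p then B $$ (i,j) else (0::'a)))"
  define A where "A = mat\<^sub>r s s (\<lambda>i. if i = s - 1 then 0\<^sub>v s else c i)"
  have "det A = 0" unfolding A_def
    by (rule det_row_0) (use ps in \<open>auto simp: c_def\<close>)
  moreover have Ac: "A \<in> carrier_mat s s" unfolding A_def by simp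
  ultimately obtain y where y: "y \<in> carrier_vec s" "y \<noteq> 0\<^sub>v s" "A *\<^sub>v y = 0\<^sub>v s"
    using det_0_iff_vec_prod_zero by blast
  have "B *\<^sub>v y = 0\<^sub>v p"
  proof (rule eq_vecI)
    fix i assume "i < dim_vec (0\<^sub>v p :: 'a vec)"
    then have i: "i < p" by simp
    have "(A *\<^sub>v y) $ i = 0" using y(3) i ps by simp
    moreover have "row A i = row B i" using i ps B unfolding A_def c_def
      by (intro eq_vecI) auto
    ultimately show "(B *\<^sub>v y) $ i = 0\<^sub>v p $ i" using i ps B Ac by simp
  qed (use B in simp)
  then show ?thesis using y by blast
qed


lemma compl_dims[simp]: "dim_row (completion k t M) = dim_row M" "dim_col (completion k t M) = dim_col M"
  unfolding completion_def by auto

lemma compl_index[simp]: "i < dim_row M \<Longrightarrow> j < dim_col M \<Longrightarrow> completion k t M $$ (i,j) = aff_eval k t (M $$ (i,j))"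
  unfolding completion_def by auto

lemma compl_lmult:
  assumes "R \<in> carrier_mat m m'" "dim_row M = m'"
  shows "completion k t (aff_lmult R M) = R * completion k t M"
proof (rule eq_matI)
  fix i j assume ij: "i < dim_row (R * completion k t M)" "j < dim_col (R * completion k t M)"
  then have i: "i < m" and j: "j < dim_col M" using assms by auto
  have "completion k t (aff_lmult R M) $$ (i,j) =
     (\<Sum>l<m'. R $$ (i,l) * fst (M $$ (l,j))) + (\<Sum>v<k. (\<Sum>l<m'. R $$ (i,l) * snd (M $$ (l,j)) v) * t v)"
    using i j assms unfolding completion_def aff_lmult_def aff_eval_def by auto
  also have "\<dots> = (\<Sum>l<m'. R $$ (i,l) * (fst (M $$ (l,j)) + (\<Sum>v<k. snd (M $$ (l,j)) v * t v)))"
    by (simp add: sum_distrib_left sum_distrib_right sum.distrib algebra_simps sum.swap[of _ "{..<k}"])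
  also have "\<dots> = (R * completion k t M) $$ (i,j)"
    using i j assms by (auto simp: scalar_prod_def aff_eval_def lessThan_atLeast0 intro!: sum.cong)
  finally show "completion k t (aff_lmult R M) $$ (i,j) = (R * completion k t M) $$ (i,j)" .
qed (use assms in \<open>auto simp: aff_lmult_def\<close>)

lemma compl_rmult:
  assumes "Q \<in> carrier_mat n' q" "dim_col M = n'"
  shows "completion k t (aff_rmult M Q) = completion k t M * Q"
proof (rule eq_matI)
  fix i j assume ij: "i < dim_row (completion k t M * Q)" "j < dim_col (completion k t M * Q)"
  then have i: "i < dim_row M" and j: "j < q" using assms by auto
  have "completion k t (aff_rmult M Q) $$ (i,j) =
     (\<Sum>l<n'. fst (M $$ (i,l)) * Q $$ (l,j)) + (\<Sum>v<k. (\<Sum>l<n'. snd (M $$ (i,l)) v * Q $$ (l,j)) * t v)"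
    using i j assms unfolding completion_def aff_rmult_def aff_eval_def by auto
  also have "\<dots> = (\<Sum>l<n'. (fst (M $$ (i,l)) + (\<Sum>v<k. snd (M $$ (i,l)) v * t v)) * Q $$ (l,j))"
    by (simp add: sum_distrib_left sum_distrib_right sum.distrib algebra_simps sum.swap[of _ "{..<k}"])
  also have "\<dots> = (completion k t M * Q) $$ (i,j)"
    using i j assms by (auto simp: scalar_prod_def aff_eval_def lessThan_atLeast0 intro!: sum.cong)
  finally show "completion k t (aff_rmult M Q) $$ (i,j) = (completion k t M * Q) $$ (i,j)" .
qed (use assms in \<open>auto simp: aff_rmult_def\<close>)

lemma co_length: "F \<subseteq> {0..<n} \<Longrightarrow> length (col_order n F) = n"
proof -
  assume F: "F \<subseteq> {0..<n}"
  then have "finite F" using finite_subset by blast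
  have "card F + card ({0..<n} - F) = n"
    using F card_Diff_subset[OF \<open>finite F\<close> F] card_mono[OF _ F] by simp
  then show ?thesis unfolding col_order_def by simp
qed

lemma co_set: "F \<subseteq> {0..<n} \<Longrightarrow> set (col_order n F) = {0..<n}"
  unfolding col_order_def using finite_subset[of F "{0..<n}"] by auto

lemma co_distinct: "F \<subseteq> {0..<n} \<Longrightarrow> distinct (col_order n F)"
  unfolding col_order_def using finite_subset[of F "{0..<n}"] by auto

lemma co_low: "F \<subseteq> {0..<n} \<Longrightarrow> j < card F \<Longrightarrow> col_order n F ! j \<in> F"
  unfolding col_order_def using finite_subset[of F "{0..<n}"]
  by (simp add: nth_append) (metis length_sorted_list_of_set nth_mem set_sorted_list_of_set)

lemma co_high: "F \<subseteq> {0..<n} \<Longrightarrow> card F \<le> j \<Longrightarrow> j < n \<Longrightarrow> col_order n F ! j \<notin> F"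
proof -
  assume F: "F \<subseteq> {0..<n}" and j: "card F \<le> j" "j < n"
  have "col_order n F ! j \<in> set (sorted_list_of_set ({0..<n} - F))"
  proof -
    have fin: "finite F" using F finite_subset by blast
    have e: "card F + card ({0..<n} - F) = n"
      using F card_Diff_subset[OF fin F] card_mono[OF _ F] by simp
    have "j - card F < length (sorted_list_of_set ({0..<n} - F))" using j e by simp
    then have "sorted_list_of_set ({0..<n} - F) ! (j - card F) \<in> set (sorted_list_of_set ({0..<n} - F))"
      by (rule nth_mem)
    then show ?thesis using j fin unfolding col_order_def by (simp add: nth_append)
  qed
  then show ?thesis by simp
qed

lemma Q_carrier: "perm_Q n F \<in> carrier_mat n n" unfolding perm_Q_def by simp

lemma Qv_nth:
  assumes F: "F \<subseteq> {0..<n}" and j: "j < n" and v: "v \<in> carrier_vec n"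
  shows "(perm_Q n F *\<^sub>v v) $ (col_order n F ! j) = v $ j"
proof -
  let ?co = "col_order n F"
  have cj: "?co ! j < n" using co_set[OF F] co_length[OF F] j nth_mem by fastforce
  have "(perm_Q n F *\<^sub>v v) $ (?co ! j) = (\<Sum>l\<in>{0..<n}. (if ?co ! j = ?co ! l then 1 else 0) * v $ l)"
    using cj v unfolding perm_Q_def by (simp add: scalar_prod_def)
  also have "\<dots> = (\<Sum>l\<in>{0..<n}. (if l = j then v $ j else 0))"
    using co_distinct[OF F] co_length[OF F] j by (intro sum.cong) (auto simp: nth_eq_iff_index_eq)
  also have "\<dots> = v $ j" using j by simp
  finally show ?thesis .
qed


lemma factor_setE:
  fixes M :: "'a::field aff mat"
  assumes "factor_set k M F"
  obtains R p where "F \<subseteq> {0..<dim_col M}" "R \<in> carrier_mat (dim_row M) (dim_row M)" "invertible_mat R"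
    "p \<le> dim_row M"
    "\<And>i j. p \<le> i \<Longrightarrow> i < dim_row M \<Longrightarrow> j < card F \<Longrightarrow>
        zero_aff (aff_rmult (aff_lmult R M) (perm_Q (dim_col M) F) $$ (i,j))"
    "dim_row M - p + card F > max (dim_row M) (dim_col M)"
    "FCmR k (mat (dim_row M - p) (dim_col M - card F) (\<lambda>(i,j).
        aff_rmult (aff_lmult R M) (perm_Q (dim_col M) F) $$ (p + i, card F + j)))"
  using assms unfolding factor_set_def Let_def by blast

lemma inv_cancel:
  fixes R :: "'a::field mat"
  assumes R: "R \<in> carrier_mat m m" "invertible_mat R" and u: "u \<in> carrier_vec m" and Ru: "R *\<^sub>v u = 0\<^sub>v m"
  shows "u = 0\<^sub>v m"
proof -
  obtain B where B: "R * B = 1\<^sub>m m" "B * R = 1\<^sub>m (dim_row B)"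
    using R unfolding invertible_mat_def inverts_mat_def by auto
  have "dim_col (B * R) = m" using R by simp
  then have "dim_row B = m" using B(2) by simp
  moreover have "dim_col (R * B) = m" using B(1) by simp
  ultimately have Bc: "B \<in> carrier_mat m m" by auto
  have "u = (B * R) *\<^sub>v u" using B(2) Bc u by simp
  also have "\<dots> = B *\<^sub>v (R *\<^sub>v u)" using Bc R u by simp
  also have "\<dots> = 0\<^sub>v m" using Ru Bc by (intro eq_vecI) (auto simp: scalar_prod_def)
  finally show ?thesis .
qed

theorem lemma5p1:
  fixes M :: "'a::field aff mat" and k :: nat and F1 F2 :: "nat set"
  assumes "aci_matrix k M"
    and "factor_set k M F1"
    and "factor_set k M F2"
  shows "F1 \<inter> F2 \<noteq> {}"
proof
  assume disj: "F1 \<inter> F2 = {}"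
  define m where "m = dim_row M"
  define n where "n = dim_col M"
  obtain R1 p1 where F1: "F1 \<subseteq> {0..<n}" and R1: "R1 \<in> carrier_mat m m" "invertible_mat R1"
    and p1: "p1 \<le> m"
    and big1: "m - p1 + card F1 > max m n"
    and fc1: "FCmR k (mat (m - p1) (n - card F1) (\<lambda>(i,j).
        aff_rmult (aff_lmult R1 M) (perm_Q n F1) $$ (p1 + i, card F1 + j)))"
    using factor_setE[OF assms(2)] unfolding m_def n_def by metis
  obtain R2 p2 where F2: "F2 \<subseteq> {0..<n}" and R2: "R2 \<in> carrier_mat m m" "invertible_mat R2"
    and p2: "p2 \<le> m"
    and z2: "\<And>i j. p2 \<le> i \<Longrightarrow> i < m \<Longrightarrow> j < card F2 \<Longrightarrow>
        zero_aff (aff_rmult (aff_lmult R2 M) (perm_Q n F2) $$ (i,j))"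
    and big2: "m - p2 + card F2 > max m n"
    using factor_setE[OF assms(3)] unfolding m_def n_def by metis
  define s1 where "s1 = card F1"
  define s2 where "s2 = card F2"
  define r1 where "r1 = m - p1"
  define co1 where "co1 = col_order n F1"
  define co2 where "co2 = col_order n F2"
  define Q1 :: "'a mat" where "Q1 = perm_Q n F1"
  define Q2 :: "'a mat" where "Q2 = perm_Q n F2"
  define N1 where "N1 = aff_rmult (aff_lmult R1 M) Q1"
  define N2 where "N2 = aff_rmult (aff_lmult R2 M) Q2"
  define C1 where "C1 = mat r1 (n - s1) (\<lambda>(i,j). N1 $$ (p1 + i, s1 + j))"
  have s1n: "s1 \<le> n" unfolding s1_def using card_mono[OF _ F1] by simp
  have s2n: "s2 \<le> n" unfolding s2_def using card_mono[OF _ F2] by simp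
  have p2s2: "p2 < s2" using big2 p2 unfolding s2_def by arith
  have r1pos: "r1 \<noteq> 0" using big1 s1n unfolding r1_def s1_def by arith
  have C1dim: "dim_row C1 = r1" "dim_col C1 = n - s1" unfolding C1_def by auto
  from fc1 r1pos have mr: "maxRank k C1 = n - s1"
    unfolding FCmR_def C1_def N1_def Q1_def r1_def s1_def by simp
  let ?S = "{vec_space.rank r1 (completion k t C1) | t. True}"
  have "?S \<subseteq> {0..n - s1}"
  proof
    fix x assume "x \<in> ?S"
    then obtain t where "x = vec_space.rank r1 (completion k t C1)" by blast
    moreover have "completion k t C1 \<in> carrier_mat r1 (n - s1)" using C1dim by auto
    then have "vec_space.rank r1 (completion k t C1) \<le> n - s1" by (rule vec_space.rank_le_nc)
    ultimately show "x \<in> {0..n - s1}" by simp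
  qed
  then have "finite ?S" using finite_subset by blast
  moreover have "?S \<noteq> {}" by blast
  ultimately have "Max ?S \<in> ?S" by (rule Max_in)
  then obtain t where rk: "vec_space.rank r1 (completion k t C1) = n - s1"
    using mr unfolding maxRank_def C1dim by auto
  define X where "X = completion k t M"
  have Xc: "X \<in> carrier_mat m n" unfolding X_def m_def n_def by auto
  have Q1c: "Q1 \<in> carrier_mat n n" and Q2c: "Q2 \<in> carrier_mat n n"
    unfolding Q1_def Q2_def by (auto intro: Q_carrier)
  have Y1: "completion k t N1 = R1 * X * Q1"
    unfolding N1_def X_def
    using compl_rmult[OF Q1c] compl_lmult[OF R1(1)] R1(1) by (simp add: aff_lmult_def m_def n_def)
  have Y2: "completion k t N2 = R2 * X * Q2"
    unfolding N2_def X_def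
    using compl_rmult[OF Q2c] compl_lmult[OF R2(1)] R2(1) by (simp add: aff_lmult_def m_def n_def)
  have N1d: "dim_row N1 = m" "dim_col N1 = n" using R1(1)
    by (auto simp: N1_def aff_rmult_def aff_lmult_def Q1_def perm_Q_def)
  have N2d: "dim_row N2 = m" "dim_col N2 = n" using R2(1)
    by (auto simp: N2_def aff_rmult_def aff_lmult_def Q2_def perm_Q_def)
  define Y1 where "Y1 = R1 * X * Q1"
  define Y2 where "Y2 = R2 * X * Q2"
  have Y1c: "Y1 \<in> carrier_mat m n" unfolding Y1_def using R1 Xc Q1c by auto
  have Y2c: "Y2 \<in> carrier_mat m n" unfolding Y2_def using R2 Xc Q2c by auto
  have Y2z: "Y2 $$ (i,j) = 0" if "p2 \<le> i" "i < m" "j < s2" for i j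
  proof -
    have "Y2 $$ (i,j) = completion k t N2 $$ (i,j)" using Y2 unfolding Y2_def by simp
    also have "\<dots> = aff_eval k t (N2 $$ (i,j))"
      using that s2n N2d by (intro compl_index) auto
    also have "\<dots> = 0" using z2[OF that[unfolded s2_def]] unfolding N2_def Q2_def
      by (simp add: zero_aff_def aff_eval_def)
    finally show ?thesis .
  qed
  define B2 where "B2 = mat p2 s2 (\<lambda>(i,j). Y2 $$ (i,j))"
  obtain y where y: "y \<in> carrier_vec s2" "y \<noteq> 0\<^sub>v s2" "B2 *\<^sub>v y = 0\<^sub>v p2"
    using wide_kernel[of B2 p2 s2] p2s2 unfolding B2_def by auto
  define y' where "y' = vec n (\<lambda>j. if j < s2 then y $ j else 0)"
  have y'c: "y' \<in> carrier_vec n" unfolding y'_def by simp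
  have Y2y: "Y2 *\<^sub>v y' = 0\<^sub>v m"
  proof (rule eq_vecI)
    fix i assume "i < dim_vec (0\<^sub>v m :: 'a vec)"
    then have i: "i < m" by simp
    have "(Y2 *\<^sub>v y') $ i = (\<Sum>j\<in>{0..<n}. Y2 $$ (i,j) * y' $ j)"
      using i Y2c y'c by (simp add: scalar_prod_def)
    also have "\<dots> = (\<Sum>j\<in>{0..<s2}. Y2 $$ (i,j) * y $ j)"
      using s2n by (intro sum.mono_neutral_cong_right) (auto simp: y'_def)
    also have "\<dots> = 0"
    proof (cases "i < p2")
      case True
      have "(B2 *\<^sub>v y) $ i = (\<Sum>j\<in>{0..<s2}. Y2 $$ (i,j) * y $ j)"
        using True y(1) unfolding B2_def by (simp add: scalar_prod_def)
      then show ?thesis using y(3) True by simp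
    next
      case False
      then show ?thesis using Y2z i by simp
    qed
    finally show "(Y2 *\<^sub>v y') $ i = 0\<^sub>v m $ i" using i by simp
  qed (use Y2c in simp)
  define z where "z = Q2 *\<^sub>v y'"
  have zc: "z \<in> carrier_vec n" unfolding z_def using mult_mat_vec_carrier[OF Q2c y'c] .
  have "R2 *\<^sub>v (X *\<^sub>v z) = 0\<^sub>v m"
  proof -
    have RX: "R2 * X \<in> carrier_mat m n" using R2(1) Xc by simp
    have "R2 *\<^sub>v (X *\<^sub>v z) = (R2 * X) *\<^sub>v z"
      using assoc_mult_mat_vec[OF R2(1) Xc zc] by simp
    also have "\<dots> = Y2 *\<^sub>v y'" unfolding Y2_def z_def
      using assoc_mult_mat_vec[OF RX Q2c y'c] by simp
    finally show ?thesis using Y2y by simp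
  qed
  then have Xz: "X *\<^sub>v z = 0\<^sub>v m" using inv_cancel[OF R2] Xc zc by simp
  have "\<exists>j0. j0 < s2 \<and> y $ j0 \<noteq> 0"
  proof (rule ccontr)
    assume "\<not> (\<exists>j0. j0 < s2 \<and> y $ j0 \<noteq> 0)"
    then have "y = 0\<^sub>v s2" using y(1) by (intro eq_vecI) auto
    then show False using y(2) by simp
  qed
  then obtain j0 where j0: "j0 < s2" "y $ j0 \<noteq> 0" by blast
  define i0 where "i0 = co2 ! j0"
  have zi0: "z $ i0 \<noteq> 0"
    using Qv_nth[OF F2, of j0 y'] j0 s2n y'c unfolding z_def i0_def co2_def Q2_def y'_def by simp
  have i0F2: "i0 \<in> F2" unfolding i0_def co2_def using co_low[OF F2] j0 s2_def by simp
  have i0n: "i0 < n" using i0F2 F2 by auto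
  have zsupp: "z $ i = 0" if "i < n" "i \<notin> F2" for i
  proof -
    have "i \<in> set co2" using co_set[OF F2] that unfolding co2_def by simp
    then obtain l where l: "l < n" "co2 ! l = i"
      using co_length[OF F2] unfolding co2_def by (metis in_set_conv_nth)
    have "l \<ge> s2" using co_low[OF F2, of l] l that unfolding co2_def s2_def by (metis not_le)
    then show ?thesis using Qv_nth[OF F2 l(1) y'c] l unfolding z_def Q2_def co2_def y'_def by simp
  qed
  define w where "w = vec n (\<lambda>j. z $ (co1 ! j))"
  have wc: "w \<in> carrier_vec n" unfolding w_def by simp
  have Qw: "Q1 *\<^sub>v w = z"
  proof (rule eq_vecI)
    fix i assume "i < dim_vec z"
    then have i: "i < n" using zc by simp
    have "i \<in> set co1" using co_set[OF F1] i unfolding co1_def by simp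
    then obtain l where l: "l < n" "co1 ! l = i"
      using co_length[OF F1] unfolding co1_def by (metis in_set_conv_nth)
    show "(Q1 *\<^sub>v w) $ i = z $ i"
      using Qv_nth[OF F1 l(1) wc] l unfolding Q1_def co1_def w_def by simp
  qed (use Q1c zc in simp)
  have Y1w: "Y1 *\<^sub>v w = 0\<^sub>v m"
  proof -
    have "Y1 *\<^sub>v w = R1 *\<^sub>v (X *\<^sub>v (Q1 *\<^sub>v w))"
    proof -
      have RX: "R1 * X \<in> carrier_mat m n" using R1(1) Xc by simp
      have Qwc: "Q1 *\<^sub>v w \<in> carrier_vec n" using mult_mat_vec_carrier[OF Q1c wc] .
      show ?thesis unfolding Y1_def
        using assoc_mult_mat_vec[OF RX Q1c wc] assoc_mult_mat_vec[OF R1(1) Xc Qwc] by simp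
    qed
    moreover have "R1 *\<^sub>v 0\<^sub>v m = 0\<^sub>v m" using R1(1) by (intro eq_vecI) (auto simp: scalar_prod_def)
    ultimately show ?thesis using Qw Xz by simp
  qed
  have wlow: "w $ j = 0" if "j < s1" for j
  proof -
    have "co1 ! j \<in> F1" using co_low[OF F1] that unfolding co1_def s1_def by simp
    moreover have "co1 ! j \<notin> F2" using disj calculation by blast
    moreover have "co1 ! j < n" using F1 calculation by auto
    moreover have "j < n" using that s1n by simp
    ultimately show ?thesis using zsupp[of "co1 ! j"] unfolding w_def by simp
  qed
  define w' where "w' = vec (n - s1) (\<lambda>j. w $ (s1 + j))"
  have w'c: "w' \<in> carrier_vec (n - s1)" unfolding w'_def by simp
  define C1c where "C1c = completion k t C1"
  have C1cc: "C1c \<in> carrier_mat r1 (n - s1)" unfolding C1c_def using C1dim by auto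
  have C1e: "C1c $$ (i,j) = Y1 $$ (p1 + i, s1 + j)" if "i < r1" "j < n - s1" for i j
  proof -
    have "C1c $$ (i,j) = aff_eval k t (C1 $$ (i,j))"
      unfolding C1c_def using that C1dim by (intro compl_index) auto
    also have "\<dots> = aff_eval k t (N1 $$ (p1 + i, s1 + j))" unfolding C1_def using that by simp
    also have "\<dots> = completion k t N1 $$ (p1 + i, s1 + j)"
      using that N1d s1n p1 unfolding r1_def by (intro compl_index[symmetric]) auto
    finally show ?thesis using Y1 unfolding Y1_def by simp
  qed
  have Cw: "C1c *\<^sub>v w' = 0\<^sub>v r1"
  proof (rule eq_vecI)
    fix i assume "i < dim_vec (0\<^sub>v r1 :: 'a vec)"
    then have i: "i < r1" by simp
    have pi: "p1 + i < m" using i unfolding r1_def by simp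
    have "(C1c *\<^sub>v w') $ i = (\<Sum>j\<in>{0..<n - s1}. Y1 $$ (p1 + i, s1 + j) * w $ (s1 + j))"
    proof -
      have "(C1c *\<^sub>v w') $ i = (\<Sum>j\<in>{0..<n - s1}. C1c $$ (i,j) * w' $ j)"
        using i C1cc w'c by (simp add: scalar_prod_def)
      also have "\<dots> = (\<Sum>j\<in>{0..<n - s1}. Y1 $$ (p1 + i, s1 + j) * w $ (s1 + j))"
        using i C1e by (intro sum.cong) (auto simp: w'_def)
      finally show ?thesis .
    qed
    also have "\<dots> = (\<Sum>j\<in>{0..<n - s1}. Y1 $$ (p1 + i, j + s1) * w $ (j + s1))"
      by (simp only: add.commute[of s1])
    also have "\<dots> = (\<Sum>j\<in>{0 + s1..<(n - s1) + s1}. Y1 $$ (p1 + i, j) * w $ j)"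
      by (rule sum.shift_bounds_nat_ivl[symmetric])
    also have "\<dots> = (\<Sum>j\<in>{s1..<n}. Y1 $$ (p1 + i, j) * w $ j)"
      using s1n by simp
    also have "\<dots> = (\<Sum>j\<in>{0..<n}. Y1 $$ (p1 + i, j) * w $ j)"
      using wlow by (intro sum.mono_neutral_left) auto
    also have "\<dots> = (Y1 *\<^sub>v w) $ (p1 + i)"
      using pi Y1c wc by (simp add: scalar_prod_def)
    also have "\<dots> = 0" using Y1w pi by simp
    finally show "(C1c *\<^sub>v w') $ i = 0\<^sub>v r1 $ i" using i by simp
  qed (use C1cc in simp)
  have "w' = 0\<^sub>v (n - s1)"
    using vec_space.full_rank_inj[OF C1cc rk[folded C1c_def] w'c Cw] .
  moreover have "w' \<noteq> 0\<^sub>v (n - s1)"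
  proof -
    have "i0 \<in> set co1" using co_set[OF F1] i0n unfolding co1_def by simp
    then obtain l where l: "l < n" "co1 ! l = i0"
      using co_length[OF F1] unfolding co1_def by (metis in_set_conv_nth)
    have "i0 \<notin> F1" using i0F2 disj by auto
    then have "l \<ge> s1" using co_low[OF F1, of l] l unfolding co1_def s1_def by (metis not_le)
    then have "w' $ (l - s1) = z $ i0" using l unfolding w'_def w_def by simp
    then have "w' $ (l - s1) \<noteq> 0" using zi0 by simp
    moreover have "l - s1 < n - s1" using l \<open>l \<ge> s1\<close> by simp
    ultimately show ?thesis by auto
  qed
  ultimately show False by simp
qed

end
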